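(* The generating function of the diagonal sums $\sum_{k \ge 1} w(n-k,k)$ (with $w(m,k)=0$ for $m<0$) is \[ \sum_{n \ge 0} \Bigl(\sum_{k \ge 1} w(n-k,k)\Bigr) q^n = \frac{q^6}{(1 - q)^3 (1 + q) (1 - 2 q^2)}. \]
   Context: A composition of $n \ge 0$ is a finite sequence $(c_1,\dots,c_t)$ of positive integers with $c_1+\cdots+c_t=n$; the empty composition is the unique composition of $0$. Let $C_{12}(n)$ be the set of compositions of $n$ all of whose parts lie in $\{1,2\}$. The number of water cells of a composition $(c_1,\dots,c_t)$ is $\sum_{i=1}^{t} \max\bigl(0, \min(\max_{j \le i} c_j, \max_{j \ge i} c_j) - c_i\bigr)$ (the number of unit squares that would hold water poured over its bargraph, in which column $i$ has height $c_i$). For $n,k \ge 0$, $W(n,k)$ is the set of compositions in $C_{12}(n)$ with exactly $k$ water cells and $w(n,k)=|W(n,k)|$. *)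

theory Defs
  imports "HOL-Computational_Algebra.Formal_Power_Series"
begin

definition C12 :: "nat \<Rightarrow> nat list set" where
  "C12 n = {c. set c \<subseteq> {1, 2} \<and> sum_list c = n}"

text \<open>Number of water cells of a composition (column i has height c!i, 0-indexed).\<close>
definition water :: "nat list \<Rightarrow> nat" where
  "water c = (\<Sum>i<length c.
      nat (max 0 (int (min (Max (set (take (Suc i) c))) (Max (set (drop i c)))) - int (c ! i))))"

definition W :: "nat \<Rightarrow> nat \<Rightarrow> nat list set" where
  "W n k = {c \<in> C12 n. water c = k}"

definition w :: "nat \<Rightarrow> nat \<Rightarrow> nat" where
  "w n k = card (W n k)"

text \<open>Diagonal sum: \<Sum>_{k\<ge>1} w(n-k,k), where w(m,k)=0 for m<0, i.e. only k \<le> n contribute.\<close>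
definition diag :: "nat \<Rightarrow> nat" where
  "diag n = (\<Sum>k\<in>{1..n}. w (n - k) k)"

end

theory Submission
  imports Defs
begin

definition wt :: "nat list \<Rightarrow> nat \<Rightarrow> nat" where
  "wt c i = (if c!i = 1 \<and> 2 \<in> set (take i c) \<and> 2 \<in> set (drop (Suc i) c) then 1 else 0)"

lemma Max12: "finite S \<Longrightarrow> S \<subseteq> {1,2::nat} \<Longrightarrow> S \<noteq> {} \<Longrightarrow> Max S = (if 2 \<in> S then 2 else 1)"
proof -
  assume a: "finite S" "S \<subseteq> {1,2::nat}" "S \<noteq> {}"
  show ?thesis
  proof (cases "2 \<in> S")
    case True
    have "Max S = 2" by (rule Max_eqI) (use a True in auto)
    then show ?thesis using True by simp
  next
    case False
    then have "S = {1}" using a by auto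
    then show ?thesis by simp
  qed
qed

lemma water_alt:
  assumes "set c \<subseteq> {1,2}"
  shows "water c = (\<Sum>i<length c. wt c i)"
  unfolding water_def
proof (rule sum.cong[OF refl])
  fix i assume i: "i \<in> {..<length c}"
  then have il: "i < length c" by simp
  define x where "x = c!i"
  have x12: "x \<in> {1,2}" using assms il nth_mem x_def by blast
  have t: "take (Suc i) c = take i c @ [x]" using il x_def by (simp add: take_Suc_conv_app_nth)
  have d: "drop i c = x # drop (Suc i) c" using il x_def by (simp add: Cons_nth_drop_Suc)
  have st: "set (take i c) \<subseteq> {1,2}" by (meson assms order_trans set_take_subset)
  have sd: "set (drop (Suc i) c) \<subseteq> {1,2}" by (meson assms order_trans set_drop_subset)
  have m1: "Max (set (take (Suc i) c)) = (if 2 \<in> insert x (set (take i c)) then 2 else 1)"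
    unfolding t using st x12 by (subst Max12) auto
  have m2: "Max (set (drop i c)) = (if 2 \<in> insert x (set (drop (Suc i) c)) then 2 else 1)"
    unfolding d using sd x12 by (subst Max12) auto
  show "nat (max 0 (int (min (Max (set (take (Suc i) c))) (Max (set (drop i c)))) - int (c ! i))) = wt c i"
  proof (cases "x = 1")
    case True
    then show ?thesis unfolding m1 m2 wt_def x_def[symmetric] by simp
  next
    case False
    then have "x = 2" using x12 by simp
    then show ?thesis unfolding m1 m2 wt_def x_def[symmetric] by simp
  qed
qed

lemma water_Cons1:
  assumes "set c \<subseteq> {1,2}"
  shows "water (1 # c) = water c"
proof -
  have "water (1#c) = (\<Sum>i<Suc (length c). wt (1#c) i)" using assms by (simp add: water_alt)
  also have "\<dots> = wt (1#c) 0 + (\<Sum>j<length c. wt (1#c) (Suc j))" by (rule sum.lessThan_Suc_shift)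
  also have "\<dots> = (\<Sum>j<length c. wt c j)" by (simp add: wt_def)
  finally show ?thesis using assms by (simp add: water_alt)
qed

lemma water_snoc1:
  assumes "set c \<subseteq> {1,2}"
  shows "water (c @ [1]) = water c"
proof -
  have "water (c@[1]) = (\<Sum>i<Suc (length c). wt (c@[1]) i)" using assms by (simp add: water_alt)
  also have "\<dots> = (\<Sum>j<length c. wt (c@[1]) j) + wt (c@[1]) (length c)" by simp
  also have "wt (c@[1]) (length c) = 0" by (simp add: wt_def)
  also have "(\<Sum>j<length c. wt (c@[1]) j) = (\<Sum>j<length c. wt c j)"
  proof (rule sum.cong[OF refl])
    fix j assume "j \<in> {..<length c}"
    then have j: "j < length c" by simp
    have "drop (Suc j) (c@[1]) = drop (Suc j) c @ [1]" using j by simp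
    then show "wt (c@[1]) j = wt c j" using j by (simp add: wt_def nth_append)
  qed
  finally show ?thesis using assms by (simp add: water_alt)
qed

lemma water_rep_front:
  "set c \<subseteq> {1,2} \<Longrightarrow> water (replicate a 1 @ c) = water c"
proof (induction a)
  case 0 then show ?case by simp
next
  case (Suc a)
  have "set (replicate a 1 @ c) \<subseteq> {1,2}" using Suc.prems by auto
  then have "water (1 # (replicate a 1 @ c)) = water (replicate a 1 @ c)" by (rule water_Cons1)
  then show ?case using Suc by simp
qed

lemma water_rep_back:
  "set c \<subseteq> {1,2} \<Longrightarrow> water (c @ replicate b 1) = water c"
proof (induction b arbitrary: c)
  case 0 then show ?case by simp
next
  case (Suc b)
  have "c @ replicate (Suc b) 1 = (c @ [1]) @ replicate b 1" by (simp add: replicate_app_Cons_same)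
  have "set (c @ [1]) \<subseteq> {1,2}" using Suc.prems by auto
  then have "water ((c @ [1]) @ replicate b 1) = water (c @ [1])" by (rule Suc.IH)
  also have "\<dots> = water c" using Suc.prems by (rule water_snoc1)
  finally show ?case using \<open>c @ replicate (Suc b) 1 = (c @ [1]) @ replicate b 1\<close> by simp
qed

lemma sum_ind_count: "(\<Sum>j<length M. if M!j = x then 1 else 0) = count_list M x"
proof (induction M)
  case Nil then show ?case by simp
next
  case (Cons y M)
  have "(\<Sum>j<length (y#M). if (y#M)!j = x then 1 else 0) =
     (\<Sum>j<Suc (length M). if (y#M)!j = x then 1 else 0)" by simp
  also have "\<dots> = (if (y#M)!0 = x then 1 else 0) + (\<Sum>j<length M. if (y#M)!(Suc j) = x then 1 else 0)"
    by (rule sum.lessThan_Suc_shift)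
  also have "\<dots> = (if y = x then 1 else 0) + (\<Sum>j<length M. if M!j = x then 1 else 0)" by simp
  finally have a: "(\<Sum>j<length (y#M). if (y#M)!j = x then 1 else 0) =
     (if y = x then 1 else 0) + (\<Sum>j<length M. if M!j = x then 1 else 0)" .
  have b: "count_list (y#M) x = (if y = x then 1 else 0) + count_list M x" by simp
  show ?case by (simp only: a b Cons.IH)
qed

lemma water_mid:
  assumes "set M \<subseteq> {1,2}"
  shows "water (2 # M @ [2]) = count_list M 1"
proof -
  have s: "set (2 # M @ [2]) \<subseteq> {1,2}" using assms by auto
  have "water (2 # M @ [2]) = (\<Sum>i<Suc (Suc (length M)). wt (2 # M @ [2]) i)"
    using s by (simp add: water_alt)
  also have "\<dots> = (\<Sum>i<Suc (length M). wt (2 # M @ [2]) i) + wt (2 # M @ [2]) (Suc (length M))"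
    by simp
  also have "wt (2 # M @ [2]) (Suc (length M)) = 0" by (simp add: wt_def)
  also have "(\<Sum>i<Suc (length M). wt (2 # M @ [2]) i) =
     wt (2 # M @ [2]) 0 + (\<Sum>j<length M. wt (2 # M @ [2]) (Suc j))"
    by (rule sum.lessThan_Suc_shift)
  also have "wt (2 # M @ [2]) 0 = 0" by (simp add: wt_def)
  also have "(\<Sum>j<length M. wt (2 # M @ [2]) (Suc j)) = (\<Sum>j<length M. if M!j = 1 then 1 else 0)"
  proof (rule sum.cong[OF refl])
    fix j assume "j \<in> {..<length M}"
    then have j: "j < length M" by simp
    have "drop (Suc j) (M@[2]) = drop (Suc j) M @ [2]" using j by simp
    then show "wt (2 # M @ [2]) (Suc j) = (if M!j = 1 then 1 else 0)"
      using j by (simp add: wt_def nth_append)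
  qed
  finally show ?thesis by (simp add: sum_ind_count)
qed


lemma sum_count: "set M \<subseteq> {1,2} \<Longrightarrow> sum_list M + count_list M 1 = 2 * length M"
  by (induction M) auto

lemma len_le_sum: "set c \<subseteq> {1,2} \<Longrightarrow> length c \<le> sum_list c"
  by (induction c) auto

lemma split_front: "set c \<subseteq> {1,2::nat} \<Longrightarrow> c = replicate (length c) 1 \<or> (\<exists>a r. c = replicate a 1 @ 2 # r)"
proof (induction c)
  case Nil then show ?case by simp
next
  case (Cons x c)
  show ?case
  proof (cases "x = 2")
    case True
    then have "x # c = replicate 0 1 @ 2 # c" by simp
    then show ?thesis by blast
  next
    case False
    then have x: "x = 1" using Cons.prems by auto
    from Cons have "c = replicate (length c) 1 \<or> (\<exists>a r. c = replicate a 1 @ 2 # r)" by auto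
    then show ?thesis
    proof
      assume "c = replicate (length c) 1"
      then have "x # c = replicate (length (x#c)) 1" using x by (metis length_Cons replicate_Suc)
      then show ?thesis by blast
    next
      assume "\<exists>a r. c = replicate a 1 @ 2 # r"
      then obtain a r where "c = replicate a 1 @ 2 # r" by blast
      then have "x # c = replicate (Suc a) 1 @ 2 # r" using x by simp
      then show ?thesis by blast
    qed
  qed
qed

lemma split_back: "set c \<subseteq> {1,2::nat} \<Longrightarrow> c = replicate (length c) 1 \<or> (\<exists>r b. c = r @ 2 # replicate b 1)"
proof -
  assume "set c \<subseteq> {1,2::nat}"
  then have "set (rev c) \<subseteq> {1,2}" by simp
  from split_front[OF this] show ?thesis
  proof
    assume "rev c = replicate (length (rev c)) 1"
    then have "c = rev (replicate (length c) 1)" by (metis length_rev rev_rev_ident)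
    then show ?thesis by simp
  next
    assume "\<exists>a r. rev c = replicate a 1 @ 2 # r"
    then obtain a r where "rev c = replicate a 1 @ 2 # r" by blast
    then have "c = rev r @ 2 # replicate a 1" by (metis rev_append rev_replicate rev_rev_ident rev.simps append_assoc append_Cons append_Nil)
    then show ?thesis by blast
  qed
qed

lemma water_f:
  assumes "set M \<subseteq> {1,2}"
  shows "water (replicate a 1 @ 2 # M @ 2 # replicate b 1) = count_list M 1"
proof -
  have e: "replicate a 1 @ 2 # M @ 2 # replicate b 1 = replicate a 1 @ ((2 # M @ [2]) @ replicate b 1)" by simp
  have s1: "set ((2 # M @ [2]) @ replicate b 1) \<subseteq> {1,2}" using assms by auto
  have s2: "set (2 # M @ [2]) \<subseteq> {1,2}" using assms by auto
  show ?thesis unfolding e water_rep_front[OF s1] water_rep_back[OF s2] water_mid[OF assms] ..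
qed

lemma water_nil: "water [] = 0" by (simp add: water_def)
lemma water_two: "water [2] = 0" by (simp add: water_alt wt_def)

lemma water_rep: "water (replicate n 1) = 0"
  using water_rep_front[of "[]" n] by (simp add: water_nil)

lemma decomp:
  assumes c: "set c \<subseteq> {1,2}" and w: "1 \<le> water c"
  shows "\<exists>a b M. set M \<subseteq> {1,2} \<and> c = replicate a 1 @ 2 # M @ 2 # replicate b 1"
proof -
  from split_front[OF c] show ?thesis
  proof
    assume "c = replicate (length c) 1"
    then have "water c = 0" by (metis water_rep)
    then show ?thesis using w by simp
  next
    assume "\<exists>a r. c = replicate a 1 @ 2 # r"
    then obtain a r where cr: "c = replicate a 1 @ 2 # r" by blast
    have r: "set r \<subseteq> {1,2}" using c cr by auto
    from split_back[OF r] show ?thesis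
    proof
      assume "r = replicate (length r) 1"
      then have "c = replicate a 1 @ [2] @ replicate (length r) 1" using cr by simp
      moreover have "water (replicate a 1 @ [2] @ replicate (length r) 1) = water ([2] @ replicate (length r) 1)"
        by (rule water_rep_front) auto
      moreover have "water ([2] @ replicate (length r) 1) = water [2]"
        by (rule water_rep_back) auto
      ultimately have "water c = water [2]" by simp
      then show ?thesis using w water_two by simp
    next
      assume "\<exists>M b. r = M @ 2 # replicate b 1"
      then obtain M b where "r = M @ 2 # replicate b 1" by blast
      moreover then have "set M \<subseteq> {1,2}" using r by auto
      ultimately show ?thesis using cr by blast
    qed
  qed
qed

lemma tw: "takeWhile (\<lambda>x. x = (1::nat)) (replicate a 1 @ 2 # R) = replicate a 1"
  by (induction a) auto

lemma f_inj:
  assumes "replicate a 1 @ 2 # M @ 2 # replicate b 1 = replicate a' 1 @ 2 # M' @ 2 # replicate b' (1::nat)"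
  shows "a = a' \<and> b = b' \<and> M = M'"
proof -
  have aa: "a = a'" using arg_cong[OF assms, of "\<lambda>L. length (takeWhile (\<lambda>x. x = (1::nat)) L)"]
    by (simp only: tw length_replicate)
  then have e1: "M @ 2 # replicate b 1 = M' @ 2 # replicate b' 1" using assms by simp
  have "rev (M @ 2 # replicate b 1) = replicate b 1 @ 2 # rev M" by simp
  moreover have "rev (M' @ 2 # replicate b' 1) = replicate b' 1 @ 2 # rev M'" by simp
  ultimately have e2: "replicate b 1 @ 2 # rev M = replicate b' 1 @ 2 # rev M'" using e1 by metis
  have bb: "b = b'" using arg_cong[OF e2, of "\<lambda>L. length (takeWhile (\<lambda>x. x = (1::nat)) L)"]
    by (simp only: tw length_replicate)
  then have "M = M'" using e1 by simp
  then show ?thesis using aa bb by simp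
qed


lemma card_shift:
  fixes h :: "'a \<Rightarrow> nat"
  assumes fin: "\<And>m. finite {x\<in>A. h x \<le> m}"
  shows "card {(b,x). x\<in>A \<and> b + h x = Suc n} = card {x\<in>A. h x = Suc n} + card {(b,x). x\<in>A \<and> b + h x = n}"
proof -
  let ?F1 = "{x\<in>A. h x = Suc n}"
  let ?F2 = "{(b,x). x\<in>A \<and> b + h x = n}"
  have eq: "{(b,x). x\<in>A \<and> b + h x = Suc n} = (\<lambda>x. (0,x)) ` ?F1 \<union> (\<lambda>(b,x). (Suc b, x)) ` ?F2"
  proof
    show "{(b,x). x\<in>A \<and> b + h x = Suc n} \<subseteq> (\<lambda>x. (0,x)) ` ?F1 \<union> (\<lambda>(b,x). (Suc b, x)) ` ?F2"
    proof (rule subsetI)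
      fix p assume "p \<in> {(b,x). x\<in>A \<and> b + h x = Suc n}"
      then obtain b x where p: "p = (b,x)" "x\<in>A" "b + h x = Suc n" by auto
      show "p \<in> (\<lambda>x. (0,x)) ` ?F1 \<union> (\<lambda>(b,x). (Suc b, x)) ` ?F2"
      proof (cases b)
        case 0 then show ?thesis using p by auto
      next
        case (Suc b')
        show ?thesis by (intro UnI2 image_eqI[where x="(b',x)"]) (use p Suc in auto)
      qed
    qed
  qed auto
  have f1: "finite ?F1" by (rule finite_subset[OF _ fin[of "Suc n"]]) auto
  have f2: "finite ?F2" by (rule finite_subset[of _ "{..n} \<times> {x\<in>A. h x \<le> n}"]) (use fin in auto)
  have "card {(b,x). x\<in>A \<and> b + h x = Suc n} = card ((\<lambda>x. (0::nat,x)) ` ?F1) + card ((\<lambda>(b,x). (Suc b, x)) ` ?F2)"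
    unfolding eq by (rule card_Un_disjoint) (use f1 f2 in auto)
  also have "card ((\<lambda>x. (0::nat,x)) ` ?F1) = card ?F1" by (rule card_image) (auto simp: inj_on_def)
  also have "card ((\<lambda>(b,x). (Suc b, x)) ` ?F2) = card ?F2" by (rule card_image) (auto simp: inj_on_def)
  finally show ?thesis .
qed

lemma card_shift0:
  fixes h :: "'a \<Rightarrow> nat"
  shows "card {(b,x). x\<in>A \<and> b + h x = 0} = card {x\<in>A. h x = 0}"
proof -
  have "{(b,x). x\<in>A \<and> b + h x = 0} = (\<lambda>x. (0::nat,x)) ` {x\<in>A. h x = 0}" by auto
  moreover have "card ((\<lambda>x. (0::nat,x)) ` {x\<in>A. h x = 0}) = card {x\<in>A. h x = 0}"
    by (rule card_image) (auto simp: inj_on_def)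
  ultimately show ?thesis by simp
qed

definition A0 :: "nat list set" where "A0 = {M. set M \<subseteq> {1,2} \<and> 1 \<in> set M}"
definition h0 :: "nat list \<Rightarrow> nat" where "h0 M = 2 * length M + 4"
definition A1 :: "(nat \<times> nat list) set" where "A1 = UNIV \<times> A0"
definition h1 :: "nat \<times> nat list \<Rightarrow> nat" where "h1 y = (case y of (b,M) \<Rightarrow> b + h0 M)"

definition G :: "nat \<Rightarrow> nat" where "G n = card {x\<in>A0. h0 x = n}"
definition U :: "nat \<Rightarrow> nat" where "U n = card {(b,x). x\<in>A0 \<and> b + h0 x = n}"
definition V :: "nat \<Rightarrow> nat" where "V n = card {(a,y). y\<in>A1 \<and> a + h1 y = n}"

lemma fin0: "finite {x\<in>A0. h0 x \<le> m}"
  by (rule finite_subset[of _ "{M. set M \<subseteq> {1,2::nat} \<and> length M \<le> m}"])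
     (auto simp: A0_def h0_def intro: finite_lists_length_le)

lemma fin1: "finite {y\<in>A1. h1 y \<le> m}"
  by (rule finite_subset[of _ "{..m} \<times> {x\<in>A0. h0 x \<le> m}"]) (auto simp: A1_def h1_def fin0)

lemma U_alt: "U n = card {y\<in>A1. h1 y = n}"
proof -
  have "{(b,x). x\<in>A0 \<and> b + h0 x = n} = {y\<in>A1. h1 y = n}" by (auto simp: A1_def h1_def)
  then show ?thesis by (simp add: U_def)
qed

lemma U_Suc: "U (Suc n) = G (Suc n) + U n"
  unfolding U_def G_def by (rule card_shift) (rule fin0)
lemma U_0: "U 0 = G 0"
  unfolding U_def G_def by (rule card_shift0)
lemma V_Suc: "V (Suc n) = U (Suc n) + V n"
  unfolding V_def U_alt by (rule card_shift) (rule fin1)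
lemma V_0: "V 0 = U 0"
  unfolding V_def U_alt by (rule card_shift0)

lemma G_closed: "G n = (if 4 \<le> n \<and> even n then 2 ^ ((n - 4) div 2) - 1 else 0)"
proof (cases "4 \<le> n \<and> even n")
  case True
  then obtain s where n: "n = 2 * s + 4" by (metis add.commute dvd_def le_Suc_ex even_add even_numeral)
  have eq: "{x\<in>A0. h0 x = n} = {M. set M \<subseteq> {1,2::nat} \<and> length M = s} - {replicate s 2}"
  proof
    show "{x\<in>A0. h0 x = n} \<subseteq> {M. set M \<subseteq> {1,2::nat} \<and> length M = s} - {replicate s 2}"
    proof (rule subsetI)
      fix M assume "M \<in> {x\<in>A0. h0 x = n}"
      then have M: "set M \<subseteq> {1,2}" "1 \<in> set M" "length M = s" using n by (auto simp: A0_def h0_def)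
      have "M \<noteq> replicate s 2"
      proof
        assume "M = replicate s 2"
        then have "(1::nat) \<in> set (replicate s 2)" using M(2) by simp
        then show False by simp
      qed
      then show "M \<in> {M. set M \<subseteq> {1,2::nat} \<and> length M = s} - {replicate s 2}" using M by simp
    qed
    show "{M. set M \<subseteq> {1,2::nat} \<and> length M = s} - {replicate s 2} \<subseteq> {x\<in>A0. h0 x = n}"
    proof
      fix M assume M: "M \<in> {M. set M \<subseteq> {1,2::nat} \<and> length M = s} - {replicate s 2}"
      have "1 \<in> set M"
      proof (rule ccontr)
        assume "1 \<notin> set M"
        then have "\<forall>y\<in>set M. y = 2" using M by auto
        then have "replicate (length M) 2 = M" by (rule replicate_length_same)
        then show False using M by auto
      qed
      then show "M \<in> {x\<in>A0. h0 x = n}" using M n by (auto simp: A0_def h0_def)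
    qed
  qed
  have "card {M. set M \<subseteq> {1,2::nat} \<and> length M = s} = 2 ^ s"
    by (simp add: card_lists_length_eq numeral_2_eq_2)
  moreover have "replicate s 2 \<in> {M. set M \<subseteq> {1,2::nat} \<and> length M = s}" by auto
  ultimately have "card ({M. set M \<subseteq> {1,2::nat} \<and> length M = s} - {replicate s 2}) = 2 ^ s - 1"
    by (simp add: card_Diff_singleton finite_lists_length_eq)
  then show ?thesis unfolding G_def eq using True n by simp
next
  case False
  have e: "{x\<in>A0. h0 x = n} = {}" using False by (auto simp: h0_def)
  have "G n = 0" by (simp only: G_def e card.empty)
  then show ?thesis using False by (simp only: if_not_P if_False)
qed


lemma sr: "sum_list (replicate a (Suc 0)) = a"
  by (induction a) auto

lemma diag_V: "diag n = V n"
proof -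
  define S where "S = {c. set c \<subseteq> {1,2::nat} \<and> 1 \<le> water c \<and> sum_list c + water c = n}"
  define T where "T = {(a,y). y\<in>A1 \<and> a + h1 y = n}"
  define f where "f = (\<lambda>(a::nat,(b::nat,M)). replicate a 1 @ 2 # M @ 2 # replicate b (1::nat))"
  have finW: "finite (W m k)" for m k
  proof (rule finite_subset[of _ "{c. set c \<subseteq> {1,2::nat} \<and> length c \<le> m}"])
    show "W m k \<subseteq> {c. set c \<subseteq> {1,2::nat} \<and> length c \<le> m}"
    proof
      fix c assume "c \<in> W m k"
      then have "set c \<subseteq> {1,2}" "sum_list c = m" by (auto simp: W_def C12_def)
      then show "c \<in> {c. set c \<subseteq> {1,2::nat} \<and> length c \<le> m}" using len_le_sum by auto
    qed
  qed (rule finite_lists_length_le, simp)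
  have "diag n = card (\<Union>k\<in>{1..n}. W (n-k) k)"
    unfolding diag_def w_def by (rule card_UN_disjoint[symmetric]) (auto simp: finW[unfolded W_def] W_def)
  also have "(\<Union>k\<in>{1..n}. W (n-k) k) = S"
  proof
    show "(\<Union>k\<in>{1..n}. W (n-k) k) \<subseteq> S" by (auto simp: S_def W_def C12_def)
    show "S \<subseteq> (\<Union>k\<in>{1..n}. W (n-k) k)"
    proof
      fix c assume "c \<in> S"
      then show "c \<in> (\<Union>k\<in>{1..n}. W (n-k) k)"
        by (intro UN_I[of "water c"]) (auto simp: S_def W_def C12_def)
    qed
  qed
  also have "S = f ` T"
  proof
    show "S \<subseteq> f ` T"
    proof
      fix c assume "c \<in> S"
      then have c: "set c \<subseteq> {1,2}" "1 \<le> water c" "sum_list c + water c = n" by (auto simp: S_def)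
      obtain a b M where M: "set M \<subseteq> {1,2}" and ce: "c = replicate a 1 @ 2 # M @ 2 # replicate b 1"
        using decomp[OF c(1,2)] by blast
      have wc: "water c = count_list M 1" using ce water_f[OF M] by simp
      then have "count_list M 1 \<noteq> 0" using c(2) by simp
      then have "1 \<in> set M" by (simp add: count_list_0_iff)
      moreover have "a + (b + h0 M) = n"
        using c(3) wc sum_count[OF M] unfolding ce h0_def by (simp add: sr)
      ultimately have "(a,(b,M)) \<in> T" using M by (simp add: T_def A1_def A0_def h1_def)
      then show "c \<in> f ` T" by (rule image_eqI[rotated]) (simp add: f_def ce)
    qed
    show "f ` T \<subseteq> S"
    proof
      fix c assume "c \<in> f ` T"
      then obtain a b M where t: "(a,(b,M)) \<in> T" and ce: "c = f (a,(b,M))" by auto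
      from t have M: "set M \<subseteq> {1,2}" "1 \<in> set M" "a + (b + h0 M) = n"
        by (auto simp: T_def A1_def A0_def h1_def)
      have ce': "c = replicate a 1 @ 2 # M @ 2 # replicate b 1" using ce by (simp add: f_def)
      have wc: "water c = count_list M 1" using ce' water_f[OF M(1)] by simp
      have "count_list M 1 \<noteq> 0" using M(2) by (simp add: count_list_0_iff)
      then show "c \<in> S" using M(1,3) wc sum_count[OF M(1)] unfolding S_def ce' h0_def by (auto simp: sr)
    qed
  qed
  also have "card (f ` T) = card T"
  proof (rule card_image)
    show "inj_on f T"
    proof (rule inj_onI)
      fix p q assume "p \<in> T" "q \<in> T" and fpq: "f p = f q"
      obtain a b M where p: "p = (a,(b,M))" by (metis prod.exhaust)
      obtain a' b' M' where q: "q = (a',(b',M'))" by (metis prod.exhaust)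
      have "replicate a 1 @ 2 # M @ 2 # replicate b 1 = replicate a' 1 @ 2 # M' @ 2 # replicate b' (1::nat)"
        using fpq unfolding p q f_def by simp
      then have "a = a' \<and> b = b' \<and> M = M'" by (rule f_inj)
      then show "p = q" using p q by simp
    qed
  qed
  finally show ?thesis by (simp add: V_def T_def)
qed

lemma G_rec_nat:
  "G n + (if n < 4 then 0 else 2 * G (n-4)) = (if n = 6 then 1 else 0) + (if n < 2 then 0 else 3 * G (n-2))"
proof (cases "n < 8")
  case True
  then have "n = 0 \<or> n = 1 \<or> n = 2 \<or> n = 3 \<or> n = 4 \<or> n = 5 \<or> n = 6 \<or> n = 7" by arith
  then show ?thesis by (elim disjE) (simp_all add: G_closed)
next
  case False
  define m where "m = n - 8"
  have n: "n = m + 8" using False m_def by simp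
  have n4: "n - 4 = m + 4" and n2: "n - 2 = m + 6" using n by simp_all
  show ?thesis
  proof (cases "even m")
    case True
    define k where "k = (2::nat) ^ (m div 2)"
    have k1: "k \<ge> 1" by (simp add: k_def)
    have e1: "4 \<le> n \<and> even n" "4 \<le> m + 4 \<and> even (m + 4)" "4 \<le> m + 6 \<and> even (m + 6)"
      using True n by auto
    have a: "(n - 4) div 2 = m div 2 + 2" "(m + 4 - 4) div 2 = m div 2" "(m + 6 - 4) div 2 = m div 2 + 1"
      using True n by auto
    have "G n = 2 ^ ((n - 4) div 2) - 1" using G_closed[of n] e1(1) by (simp only: if_True simp_thms)
    also have "\<dots> = 4 * k - 1" unfolding a k_def by (simp add: power_add)
    finally have g1: "G n = 4 * k - 1" .
    have "G (m+4) = 2 ^ ((m + 4 - 4) div 2) - 1" using G_closed[of "m+4"] e1(2) by (simp only: if_True simp_thms)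
    also have "\<dots> = k - 1" unfolding a k_def by simp
    finally have g2: "G (n-4) = k - 1" unfolding n4 .
    have "G (m+6) = 2 ^ ((m + 6 - 4) div 2) - 1" using G_closed[of "m+6"] e1(3) by (simp only: if_True simp_thms)
    also have "\<dots> = 2 * k - 1" unfolding a k_def by simp
    finally have g3: "G (n-2) = 2 * k - 1" unfolding n2 .
    have "\<not> n < 4" "\<not> n < 2" "n \<noteq> 6" using n by auto
    then show ?thesis unfolding g1 g2 g3 using k1 by simp
  next
    case False
    have "\<not> (4 \<le> n \<and> even n)" "\<not> (4 \<le> n - 4 \<and> even (n - 4))" "\<not> (4 \<le> n - 2 \<and> even (n - 2))"
      using False n by auto
    then have "G n = 0" "G (n-4) = 0" "G (n-2) = 0" using G_closed by (simp_all only: if_False simp_thms)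
    then show ?thesis using n by simp
  qed
qed

definition Ff :: "rat fps" where "Ff = Abs_fps (\<lambda>n. of_nat (G n))"
definition Uf :: "rat fps" where "Uf = Abs_fps (\<lambda>n. of_nat (U n))"
definition Vf :: "rat fps" where "Vf = Abs_fps (\<lambda>n. of_nat (V n))"

lemma Ff_eq: "Ff + 2 * (fps_X ^ 4 * Ff) = fps_X ^ 6 + 3 * (fps_X ^ 2 * Ff)"
proof (rule fps_ext)
  fix n
  have "of_nat (G n + (if n < 4 then 0 else 2 * G (n-4))) =
        (of_nat ((if n = 6 then 1 else 0) + (if n < 2 then 0 else 3 * G (n-2))) :: rat)"
    by (simp only: G_rec_nat)
  then show "fps_nth (Ff + 2 * (fps_X ^ 4 * Ff)) n = fps_nth (fps_X ^ 6 + 3 * (fps_X ^ 2 * Ff)) n"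
    by (simp add: Ff_def fps_numeral_fps_const fps_X_power_mult_nth split: if_splits)
qed

lemma Uf_eq: "Uf = Ff + fps_X * Uf"
proof (rule fps_ext)
  fix n show "fps_nth Uf n = fps_nth (Ff + fps_X * Uf) n"
    by (cases n) (simp_all add: Uf_def Ff_def U_0 U_Suc)
qed

lemma Vf_eq: "Vf = Uf + fps_X * Vf"
proof (rule fps_ext)
  fix n show "fps_nth Vf n = fps_nth (Uf + fps_X * Vf) n"
    by (cases n) (simp_all add: Uf_def Vf_def V_0 V_Suc)
qed

theorem mainTheorem8:
  shows "(Abs_fps (\<lambda>n. of_nat (diag n)) :: rat fps) =
    fps_X ^ 6 / ((1 - fps_X) ^ 3 * (1 + fps_X) * (1 - 2 * fps_X ^ 2))"
proof -
  let ?P = "(1 - fps_X) ^ 3 * (1 + fps_X) * (1 - 2 * fps_X ^ 2) :: rat fps"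
  have D: "Abs_fps (\<lambda>n. of_nat (diag n)) = Vf" by (simp add: Vf_def diag_V)
  have e1: "Vf - fps_X * Vf = Uf" using Vf_eq by (simp add: algebra_simps)
  have e2: "Uf - fps_X * Uf = Ff" using Uf_eq by (simp add: algebra_simps)
  have e3: "Ff * (1 - 3 * fps_X ^ 2 + 2 * fps_X ^ 4) = fps_X ^ 6"
    using Ff_eq by (simp add: algebra_simps)
  have "Vf * ?P = ((Vf - fps_X * Vf) - fps_X * (Vf - fps_X * Vf)) * (1 - 3 * fps_X ^ 2 + 2 * fps_X ^ 4)"
    by (simp add: algebra_simps power_numeral_reduce)
  also have "\<dots> = fps_X ^ 6" using e1 e2 e3 by simp
  finally have VP: "Vf * ?P = fps_X ^ 6" .
  have P0: "fps_nth ?P 0 = 1" by (simp add: fps_power_zeroth)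
  have "?P \<noteq> 0"
  proof
    assume h: "?P = 0"
    show False using P0 unfolding h by simp
  qed
  then have "fps_X ^ 6 / ?P = Vf" using VP[symmetric] by simp
  then show ?thesis using D by simp
qed

end
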